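(* Let $(A,\mathcal{R})$ and $(B,\mathcal{S})$ be objects of $\mathbf{T}$ and let $f:(A,\mathcal{R})\to(B,\mathcal{S})$ be a $\mathbf{T}$-morphism. Then $\Psi f=f\sqcup \mathrm{id}_V:(\overline{A},\overline{\mathcal{R}})\to(\overline{B},\overline{\mathcal{S}})$ is a $\mathbf{T}$-morphism, where $(\overline{A},\overline{\mathcal{R}})=\Psi(A,\mathcal{R})$ and $(\overline{B},\overline{\mathcal{S}})=\Psi(B,\mathcal{S})$.
   Context: $\mathbf{T}$ is the category whose objects are pairs $(A,\mathcal{R})$ with $A$ a set and $\mathcal{R}$ an arbitrary family of subsets of $A$, and whose morphisms $f:(A,\mathcal{R})\to(B,\mathcal{S})$ are maps $f:A\to B$ with $f^{-1}[S]\in\mathcal{R}$ for all $S\in\mathcal{S}$. Fix a finite simple graph (symmetric, loopless) with vertex set $V=\{v_1,\dots,v_6\}$ and edge set $\mathcal{G}$ (a family of two-element subsets of $V$) having no non-identity automorphism. For a $\mathbf{T}$-object $(A,\mathcal{R})$ define $\Psi(A,\mathcal{R})=(\overline{A},\overline{\mathcal{R}})$ where $\overline{A}=A\sqcup V$ (disjoint union) and $\overline{\mathcal{R}}$ consists of the sets $\{v_i\}$ and $\overline{A}\setminus\{v_i\}$ for $i\in\{1,\dots,6\}$; the sets $G$ and $\overline{A}\setminus G$ for $G\in\mathcal{G}$; and the sets $\{v_1,v_2,v_3\}\cup R$ and $\{v_4,v_5,v_6\}\cup(A\setminus R)$ for $R\in\mathcal{R}$. For a map $f:A\to B$ put $\Psi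 f=f\sqcup\mathrm{id}_V:\overline{A}\to\overline{B}$. *)

theory Defs
  imports Main
begin

definition T_obj :: "'a set \<Rightarrow> 'a set set \<Rightarrow> bool" where
  "T_obj A R \<longleftrightarrow> R \<subseteq> Pow A"

definition T_mor :: "'a set \<Rightarrow> 'a set set \<Rightarrow> 'b set \<Rightarrow> 'b set set \<Rightarrow> ('a \<Rightarrow> 'b) \<Rightarrow> bool" where
  "T_mor A R B S f \<longleftrightarrow> (\<forall>x\<in>A. f x \<in> B) \<and> (\<forall>T\<in>S. {x\<in>A. f x \<in> T} \<in> R)"

definition Vset :: "(nat \<Rightarrow> 'v) \<Rightarrow> 'v set" where
  "Vset v = v ` {1..6}"

definition rigid_graph6 :: "(nat \<Rightarrow> 'v) \<Rightarrow> 'v set set \<Rightarrow> bool" where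
  "rigid_graph6 v G \<longleftrightarrow>
     inj_on v {1..6} \<and>
     (\<forall>e\<in>G. e \<subseteq> Vset v \<and> card e = 2) \<and>
     (\<forall>\<sigma>. bij_betw \<sigma> (Vset v) (Vset v) \<and> (\<lambda>e. \<sigma> ` e) ` G = G
          \<longrightarrow> (\<forall>x\<in>Vset v. \<sigma> x = x))"

definition Psi_car :: "(nat \<Rightarrow> 'v) \<Rightarrow> 'a set \<Rightarrow> ('a + 'v) set" where
  "Psi_car v A = Inl ` A \<union> Inr ` Vset v"

definition Psi_fam :: "(nat \<Rightarrow> 'v) \<Rightarrow> 'v set set \<Rightarrow> 'a set \<Rightarrow> 'a set set \<Rightarrow> ('a + 'v) set set" where
  "Psi_fam v G A R =
     {{Inr (v i)} | i. i \<in> {1..6}}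
   \<union> {Psi_car v A - {Inr (v i)} | i. i \<in> {1..6}}
   \<union> {Inr ` E | E. E \<in> G}
   \<union> {Psi_car v A - Inr ` E | E. E \<in> G}
   \<union> {Inr ` {v 1, v 2, v 3} \<union> Inl ` X | X. X \<in> R}
   \<union> {Inr ` {v 4, v 5, v 6} \<union> Inl ` (A - X) | X. X \<in> R}"

definition Psi_map :: "('a \<Rightarrow> 'b) \<Rightarrow> ('a + 'v) \<Rightarrow> ('b + 'v)" where
  "Psi_map f = map_sum f id"

end

theory Submission
  imports Defs
begin

lemma fam1: "i \<in> {1..6} \<Longrightarrow> {Inr (v i)} \<in> Psi_fam v G A R"
  unfolding Psi_fam_def
  apply (rule UnI1, rule UnI1, rule UnI1, rule UnI1, rule UnI1, rule CollectI)
  by (rule exI[of _ i]) simp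

lemma fam2: "i \<in> {1..6} \<Longrightarrow> Psi_car v A - {Inr (v i)} \<in> Psi_fam v G A R"
  unfolding Psi_fam_def
  apply (rule UnI1, rule UnI1, rule UnI1, rule UnI1, rule UnI2, rule CollectI)
  by (rule exI[of _ i]) simp

lemma fam3: "E \<in> G \<Longrightarrow> Inr ` E \<in> Psi_fam v G A R"
  unfolding Psi_fam_def
  apply (rule UnI1, rule UnI1, rule UnI1, rule UnI2, rule CollectI)
  by (rule exI[of _ E]) simp

lemma fam4: "E \<in> G \<Longrightarrow> Psi_car v A - Inr ` E \<in> Psi_fam v G A R"
  unfolding Psi_fam_def
  apply (rule UnI1, rule UnI1, rule UnI2, rule CollectI)
  by (rule exI[of _ E]) simp

lemma fam5: "X \<in> R \<Longrightarrow> Inr ` {v 1, v 2, v 3} \<union> Inl ` X \<in> Psi_fam v G A R"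
  unfolding Psi_fam_def
  apply (rule UnI1, rule UnI2, rule CollectI)
  by (rule exI[of _ X]) simp

lemma fam6: "X \<in> R \<Longrightarrow> Inr ` {v 4, v 5, v 6} \<union> Inl ` (A - X) \<in> Psi_fam v G A R"
  unfolding Psi_fam_def
  apply (rule UnI2, rule CollectI)
  by (rule exI[of _ X]) simp

theorem lemma3p1:
  fixes v :: "nat \<Rightarrow> 'v" and G :: "'v set set"
    and A :: "'a set" and R :: "'a set set" and B :: "'b set" and S :: "'b set set"
    and f :: "'a \<Rightarrow> 'b"
  assumes "rigid_graph6 v G"
    and "T_obj A R" and "T_obj B S"
    and "T_mor A R B S f"
  shows "T_mor (Psi_car v A) (Psi_fam v G A R) (Psi_car v B) (Psi_fam v G B S) (Psi_map f)"
proof -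
  have fAB: "\<forall>x\<in>A. f x \<in> B" and pre: "\<forall>T\<in>S. {x\<in>A. f x \<in> T} \<in> R"
    using assms(4) unfolding T_mor_def by auto
  have GV: "\<And>E. E \<in> G \<Longrightarrow> E \<subseteq> Vset v" using assms(1) unfolding rigid_graph6_def by auto
  have V123: "{v 1, v 2, v 3} \<subseteq> Vset v" and V456: "{v 4, v 5, v 6} \<subseteq> Vset v"
    and Vi: "\<And>i. i \<in> {1..6} \<Longrightarrow> v i \<in> Vset v"
    unfolding Vset_def by auto
  have inr: "\<And>x E. (Psi_map f x \<in> Inr ` E) = (x \<in> Inr ` E)"
    by (case_tac x) (auto simp: Psi_map_def)
  let ?P = "\<lambda>T. {x\<in>Psi_car v A. Psi_map f x \<in> T}"
  have maps: "\<forall>x\<in>Psi_car v A. Psi_map f x \<in> Psi_car v B"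
    using fAB by (auto simp: Psi_car_def Psi_map_def)
  have "?P T \<in> Psi_fam v G A R" if T: "T \<in> Psi_fam v G B S" for T
  proof -
    from T consider
        (a) i where "i \<in> {1..6}" "T = {Inr (v i)}"
      | (b) i where "i \<in> {1..6}" "T = Psi_car v B - {Inr (v i)}"
      | (c) E where "E \<in> G" "T = Inr ` E"
      | (d) E where "E \<in> G" "T = Psi_car v B - Inr ` E"
      | (e) X where "X \<in> S" "T = Inr ` {v 1, v 2, v 3} \<union> Inl ` X"
      | (f) X where "X \<in> S" "T = Inr ` {v 4, v 5, v 6} \<union> Inl ` (B - X)"
      apply (simp only: Psi_fam_def Un_iff mem_Collect_eq)
      apply (elim disjE exE conjE)
           apply (rule that(1); assumption)
          apply (rule that(2); assumption)
         apply (rule that(3); assumption)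
        apply (rule that(4); assumption)
       apply (rule that(5); assumption)
      apply (rule that(6); assumption)
      done
    then show ?thesis
    proof cases
      case (a i)
      then have "?P T = {Inr (v i)}"
        using Vi[OF a(1)] by (auto simp: Psi_car_def Psi_map_def)
      then show ?thesis using a by (simp only: fam1 fam2 fam3 fam4 fam5 fam6)
    next
      case (b i)
      then have "?P T = Psi_car v A - {Inr (v i)}"
        using maps inr[of _ "{v i}"] by auto
      then show ?thesis using b by (simp only: fam1 fam2 fam3 fam4 fam5 fam6)
    next
      case (c E)
      then have "?P T = Inr ` E"
        using GV[OF c(1)] by (auto simp: Psi_car_def Psi_map_def)
      then show ?thesis using c by (simp only: fam1 fam2 fam3 fam4 fam5 fam6)
    next
      case (d E)
      then have "?P T = Psi_car v A - Inr ` E"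
        using maps inr[of _ E] by auto
      then show ?thesis using d by (simp only: fam1 fam2 fam3 fam4 fam5 fam6)
    next
      case (e X)
      then have "?P T = Inr ` {v 1, v 2, v 3} \<union> Inl ` {x\<in>A. f x \<in> X}"
        using V123 by (auto simp: Psi_car_def Psi_map_def)
      moreover have "{x\<in>A. f x \<in> X} \<in> R" using pre e by blast
      ultimately show ?thesis by (simp only: fam1 fam2 fam3 fam4 fam5 fam6)
    next
      case (f X)
      then have "?P T = Inr ` {v 4, v 5, v 6} \<union> Inl ` (A - {x\<in>A. f x \<in> X})"
        using fAB V456 by (auto simp: Psi_car_def Psi_map_def)
      moreover have "{x\<in>A. f x \<in> X} \<in> R" using pre f by blast
      ultimately show ?thesis by (simp only: fam1 fam2 fam3 fam4 fam5 fam6)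
    qed
  qed
  then show ?thesis using maps unfolding T_mor_def by blast
qed

end
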